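(* Let $k\ge1$ and let $A_1,\dots,A_n$ be independent events with probabilities $u_i=\mathbf{P}(A_i)\in[0,1]$, where the sequence $u_1,\dots,u_n$ is either nondecreasing or nonincreasing. Then \[ \mathbf{P}\big(\{A_i\}_{i=1}^n\text{ has no }k\text{-gaps}\big)\;\ge\;\prod_{i=1}^n f_k(1-u_i). \]
   Context: For an integer $k\ge1$, $f_k:[0,1]\to[0,1]$ denotes the unique decreasing function satisfying $f_k(x)^k-f_k(x)^{k+1}=x^k-x^{k+1}$ for all $x\in[0,1]$; it is continuous with $f_k(0)=1$, $f_k(1)=0$. A sequence of events $A_1,\dots,A_n$ has a $k$-gap if there is an index $i$ with $i+k-1\le n$ such that none of $A_i,\dots,A_{i+k-1}$ occurs. *)

theory Defs
  imports "HOL-Probability.Probability"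
begin

text \<open>f_k: the unique decreasing function h on [0,1] (with values in [0,1]) satisfying
  h(x)^k - h(x)^(k+1) = x^k - x^(k+1); extended by 0 outside [0,1] to make it unique as
  a HOL function.\<close>
definition fk :: "nat \<Rightarrow> real \<Rightarrow> real" where
  "fk k = (THE h. (\<forall>x\<in>{0..1}. h x \<in> {0..1} \<and> h x ^ k - h x ^ (k+1) = x ^ k - x ^ (k+1))
              \<and> antimono_on {0..1} h \<and> (\<forall>x. x \<notin> {0..1} \<longrightarrow> h x = 0))"

definition has_k_gap :: "nat \<Rightarrow> nat \<Rightarrow> (nat \<Rightarrow> 'a set) \<Rightarrow> 'a \<Rightarrow> bool" where
  "has_k_gap k n A w \<longleftrightarrow> (\<exists>i. 1 \<le> i \<and> i + k - 1 \<le> n \<and> (\<forall>j\<in>{i..i+k-1}. w \<notin> A j))"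

end

theory Submission
  imports Defs
begin


definition gk :: "nat \<Rightarrow> real \<Rightarrow> real" where "gk k t = t^k - t^(k+1)"

lemma gk_deriv: "DERIV (gk k) x :> (real k * x^(k-1) - real (k+1) * x^k)"
  unfolding gk_def by (intro derivative_eq_intros) auto

lemma gk_cont: "continuous_on S (gk k)"
  unfolding gk_def by (intro continuous_intros)

lemma gk_strict_inc:
  assumes "k \<ge> 1" "0 \<le> a" "a < b" "b \<le> real k / (k+1)"
  shows "gk k a < gk k b"
proof (rule DERIV_pos_imp_increasing_open[OF assms(3)])
  fix x assume x: "a < x" "x < b"
  have x0: "x > 0" using x assms by auto
  have "real k - real (k+1) * x > 0"
  proof -
    have "x < real k / (k+1)" using x assms by auto
    then have "x * (k+1) < k" by (simp add: field_simps)
    then show ?thesis by (simp add: algebra_simps)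
  qed
  moreover have "real k * x^(k-1) - real (k+1) * x^k = x^(k-1) * (real k - real (k+1) * x)"
    using assms(1) by (cases k) (auto simp: algebra_simps)
  ultimately have "real k * x^(k-1) - real (k+1) * x^k > 0" using x0 by simp
  then show "\<exists>y. DERIV (gk k) x :> y \<and> 0 < y" using gk_deriv by blast
qed (rule gk_cont)

lemma gk_strict_dec:
  assumes "k \<ge> 1" "real k / (k+1) \<le> a" "a < b" "b \<le> 1"
  shows "gk k a > gk k b"
proof (rule DERIV_neg_imp_decreasing_open[OF assms(3)])
  fix x assume x: "a < x" "x < b"
  have c0: "real k / (k+1) > 0" using assms by auto
  have x0: "x > 0" using x assms(2) c0 by linarith
  have "real k - real (k+1) * x < 0"
  proof -
    have "x > real k / (k+1)" using x assms by auto
    then have "x * (k+1) > k" by (simp add: field_simps)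
    then show ?thesis by (simp add: algebra_simps)
  qed
  moreover have "real k * x^(k-1) - real (k+1) * x^k = x^(k-1) * (real k - real (k+1) * x)"
    using assms(1) by (cases k) (auto simp: algebra_simps)
  ultimately have "real k * x^(k-1) - real (k+1) * x^k < 0" using x0 by (simp add: mult_pos_neg)
  then show "\<exists>y. DERIV (gk k) x :> y \<and> y < 0" using gk_deriv by blast
qed (rule gk_cont)

lemma gk_nonneg: "0 \<le> t \<Longrightarrow> t \<le> 1 \<Longrightarrow> 0 \<le> gk k t"
  unfolding gk_def using mult_right_mono[of t 1 "t^k"] by simp

lemma gk_0: "k \<ge> 1 \<Longrightarrow> gk k 0 = 0" unfolding gk_def by simp
lemma gk_1: "gk k 1 = 0" unfolding gk_def by simp

lemma gk_le_c:
  assumes "k \<ge> 1" "0 \<le> t" "t \<le> 1"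
  shows "gk k t \<le> gk k (real k / (k+1))"
proof -
  consider "t < real k / (k+1)" | "t = real k / (k+1)" | "t > real k / (k+1)" by linarith
  then show ?thesis
  proof cases
    case 1 then show ?thesis using gk_strict_inc[OF assms(1,2) 1] by simp
  next
    case 3 then show ?thesis using gk_strict_dec[OF assms(1) _ 3 assms(3)] by simp
  qed simp
qed

lemma gk_eq_c:
  assumes "k \<ge> 1" "0 \<le> t" "t \<le> 1" "gk k t = gk k (real k / (k+1))"
  shows "t = real k / (k+1)"
proof -
  consider "t < real k / (k+1)" | "t = real k / (k+1)" | "t > real k / (k+1)" by linarith
  then show ?thesis
  proof cases
    case 1 then show ?thesis using gk_strict_inc[OF assms(1,2) 1] assms(4) by simp
  next
    case 3 then show ?thesis using gk_strict_dec[OF assms(1) _ 3 assms(3)] assms(4) by simp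
  qed simp
qed

lemma gk_inj_hi:
  assumes "k \<ge> 1" "real k / (k+1) \<le> a" "a \<le> 1" "real k / (k+1) \<le> b" "b \<le> 1" "gk k a = gk k b"
  shows "a = b"
  using gk_strict_dec[OF assms(1) assms(2) _ assms(5)] gk_strict_dec[OF assms(1) assms(4) _ assms(3)] assms(6)
  by (cases a b rule: linorder_cases) auto

lemma gk_inj_lo:
  assumes "k \<ge> 1" "0 \<le> a" "a \<le> real k / (k+1)" "0 \<le> b" "b \<le> real k / (k+1)" "gk k a = gk k b"
  shows "a = b"
  using gk_strict_inc[OF assms(1) assms(2) _ assms(5)] gk_strict_inc[OF assms(1) assms(4) _ assms(3)] assms(6)
  by (cases a b rule: linorder_cases) auto

definition fspec :: "nat \<Rightarrow> (real \<Rightarrow> real) \<Rightarrow> bool" where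
  "fspec k h \<longleftrightarrow> (\<forall>x\<in>{0..1}. h x \<in> {0..1} \<and> h x ^ k - h x ^ (k+1) = x ^ k - x ^ (k+1))
              \<and> antimono_on {0..1} h \<and> (\<forall>x. x \<notin> {0..1} \<longrightarrow> h x = 0)"

lemma fspec_side:
  assumes "k \<ge> 1" "fspec k h" "0 \<le> x" "x \<le> 1"
  shows "0 \<le> h x" "h x \<le> 1" "gk k (h x) = gk k x"
    "x \<le> real k / (k+1) \<Longrightarrow> real k / (k+1) \<le> h x"
    "real k / (k+1) \<le> x \<Longrightarrow> h x \<le> real k / (k+1)"
proof -
  let ?c = "real k / (k+1)"
  have c01: "0 \<le> ?c" "?c \<le> 1" by auto
  have H: "\<And>x. 0 \<le> x \<Longrightarrow> x \<le> 1 \<Longrightarrow> 0 \<le> h x \<and> h x \<le> 1 \<and> gk k (h x) = gk k x"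
    using assms(2) unfolding fspec_def gk_def by auto
  have am: "antimono_on {0..1} h" using assms(2) unfolding fspec_def by auto
  have hc: "h ?c = ?c" using H[OF c01] gk_eq_c[OF assms(1)] by auto
  show "0 \<le> h x" "h x \<le> 1" "gk k (h x) = gk k x" using H[OF assms(3,4)] by auto
  show "x \<le> ?c \<Longrightarrow> ?c \<le> h x"
    using am hc assms(3,4) c01 unfolding monotone_on_def by force
  show "?c \<le> x \<Longrightarrow> h x \<le> ?c"
    using am hc assms(3,4) c01 unfolding monotone_on_def by force
qed

lemma fspec_unique:
  assumes "k \<ge> 1" "fspec k h1" "fspec k h2"
  shows "h1 = h2"
proof
  fix x
  show "h1 x = h2 x"
  proof (cases "0 \<le> x \<and> x \<le> 1")
    case True
    note a1 = fspec_side[OF assms(1,2)] and a2 = fspec_side[OF assms(1,3)]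
    show ?thesis
    proof (cases "x \<le> real k / (k+1)")
      case le: True
      show ?thesis using True le a1 a2 gk_inj_hi[OF assms(1), of "h1 x" "h2 x"] by auto
    next
      case False
      then have le: "real k / (k+1) \<le> x" by simp
      show ?thesis using True le a1 a2 gk_inj_lo[OF assms(1), of "h1 x" "h2 x"] by auto
    qed
  next
    case False
    then show ?thesis using assms(2,3) unfolding fspec_def by auto
  qed
qed

lemma gk_weak_inc: "k \<ge> 1 \<Longrightarrow> 0 \<le> a \<Longrightarrow> a \<le> b \<Longrightarrow> b \<le> real k/(k+1) \<Longrightarrow> gk k a \<le> gk k b"
  using gk_strict_inc[of k a b] by (cases "a = b") auto

lemma gk_weak_dec: "k \<ge> 1 \<Longrightarrow> real k/(k+1) \<le> a \<Longrightarrow> a \<le> b \<Longrightarrow> b \<le> 1 \<Longrightarrow> gk k b \<le> gk k a"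
  using gk_strict_dec[of k a b] by (cases "a = b") auto

lemma fspec_exists:
  assumes k: "k \<ge> 1"
  shows "\<exists>h. fspec k h"
proof -
  define c where "c = real k / (k+1)"
  have c01: "0 \<le> c" "c \<le> 1" unfolding c_def by auto
  have ex_hi: "\<exists>y. c \<le> y \<and> y \<le> 1 \<and> gk k y = gk k x" if "0 \<le> x" "x \<le> c" for x
  proof -
    have "gk k 1 \<le> gk k x" using gk_1 gk_nonneg that c01 by auto
    moreover have "gk k x \<le> gk k c" using gk_le_c[OF k, of x] that c01 unfolding c_def by auto
    ultimately show ?thesis using IVT2'[of "gk k" 1 "gk k x" c] c01 gk_cont by auto
  qed
  have ex_lo: "\<exists>y. 0 \<le> y \<and> y \<le> c \<and> gk k y = gk k x" if "c \<le> x" "x \<le> 1" for x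
  proof -
    have "gk k 0 \<le> gk k x" using gk_0[OF k] gk_nonneg that c01 by auto
    moreover have "gk k x \<le> gk k c" using gk_le_c[OF k, of x] that c01 unfolding c_def by auto
    ultimately show ?thesis using IVT'[of "gk k" 0 "gk k x" c] c01 gk_cont by auto
  qed
  define r where "r x = (if x \<notin> {0..1} then 0 else if x \<le> c then (SOME y. c \<le> y \<and> y \<le> 1 \<and> gk k y = gk k x)
     else (SOME y. 0 \<le> y \<and> y \<le> c \<and> gk k y = gk k x))" for x
  have r_hi: "c \<le> r x \<and> r x \<le> 1 \<and> gk k (r x) = gk k x" if "0 \<le> x" "x \<le> c" for x
    using someI_ex[OF ex_hi[OF that]] that c01 unfolding r_def by auto
  have r_lo: "0 \<le> r x \<and> r x \<le> c \<and> gk k (r x) = gk k x" if "c < x" "x \<le> 1" for x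
    using someI_ex[OF ex_lo[of x]] that c01 unfolding r_def by auto
  have "fspec k r"
    unfolding fspec_def
  proof (intro conjI)
    show "\<forall>x\<in>{0..1}. r x \<in> {0..1} \<and> r x ^ k - r x ^ (k + 1) = x ^ k - x ^ (k + 1)"
    proof
      fix x :: real assume "x \<in> {0..1}"
      then show "r x \<in> {0..1} \<and> r x ^ k - r x ^ (k + 1) = x ^ k - x ^ (k + 1)"
        using r_hi[of x] r_lo[of x] c01 unfolding gk_def by (cases "x \<le> c") auto
    qed
  next
    show "\<forall>x. x \<notin> {0..1} \<longrightarrow> r x = 0" unfolding r_def by auto
  next
    show "antimono_on {0..1} r"
      unfolding monotone_on_def
    proof (intro ballI impI)
      fix a b :: real assume ab: "a \<in> {0..1}" "b \<in> {0..1}" "a \<le> b"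
      show "r b \<le> r a"
      proof (cases "b \<le> c")
        case True
        have "gk k (r a) \<le> gk k (r b)" using r_hi[of a] r_hi[of b] ab True gk_weak_inc[OF k, of a b] unfolding c_def by auto
        then show ?thesis using r_hi[of a] r_hi[of b] ab True gk_strict_dec[OF k, of "r a" "r b"] unfolding c_def
          by (cases "r a < r b") auto
      next
        case bF: False
        show ?thesis
        proof (cases "a \<le> c")
          case True then show ?thesis using r_hi[of a] r_lo[of b] ab bF by auto
        next
          case False
          have "gk k (r b) \<le> gk k (r a)" using r_lo[of a] r_lo[of b] ab False bF gk_weak_dec[OF k, of a b] unfolding c_def by auto
          then show ?thesis using r_lo[of a] r_lo[of b] ab False bF gk_strict_inc[OF k, of "r a" "r b"] unfolding c_def
            by (cases "r a < r b") auto
        qed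
      qed
    qed
  qed
  then show ?thesis by blast
qed

lemma fk_spec: "k \<ge> 1 \<Longrightarrow> fspec k (fk k)"
proof -
  assume k: "k \<ge> 1"
  have "\<exists>!h. fspec k h" using fspec_exists[OF k] fspec_unique[OF k] by blast
  then have "fspec k (THE h. fspec k h)" by (rule theI')
  moreover have "fk k = (THE h. fspec k h)" unfolding fk_def fspec_def ..
  ultimately show ?thesis by simp
qed

definition S :: "real \<Rightarrow> real \<Rightarrow> nat \<Rightarrow> real" where
  "S y q n = (\<Sum>i<n. y^i * q^(n-1-i))"

lemma S_0[simp]: "S y q 0 = 0" unfolding S_def by simp

lemma S_Suc1: "S y q (Suc n) = y^n + q * S y q n"
proof -
  have "S y q (Suc n) = y^n + (\<Sum>i<n. y^i * q^(n-i))" unfolding S_def by simp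
  also have "(\<Sum>i<n. y^i * q^(n-i)) = (\<Sum>i<n. q * (y^i * q^(n-1-i)))"
  proof (rule sum.cong)
    fix i assume "i \<in> {..<n}"
    then have "n - i = Suc (n-1-i)" by auto
    then show "y^i * q^(n-i) = q * (y^i * q^(n-1-i))" by simp
  qed simp
  finally show ?thesis unfolding S_def by (simp add: sum_distrib_left)
qed

lemma S_Suc2: "S y q (Suc n) = q^n + y * S y q n"
proof -
  have "S y q (Suc n) = q^n + (\<Sum>i<n. y^(Suc i) * q^(n - Suc i))"
    unfolding S_def sum.lessThan_Suc_shift by simp
  also have "(\<Sum>i<n. y^(Suc i) * q^(n - Suc i)) = (\<Sum>i<n. y * (y^i * q^(n-1-i)))"
    by (rule sum.cong) auto
  finally show ?thesis unfolding S_def by (simp add: sum_distrib_left)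
qed

lemma S_nonneg: "0 \<le> y \<Longrightarrow> 0 \<le> q \<Longrightarrow> 0 \<le> S y q n"
  unfolding S_def by (intro sum_nonneg) auto

lemma S_diff: "(y - q) * S y q n = y^n - q^n"
proof (induction n)
  case (Suc n)
  have "(y-q)*S y q (Suc n) = (y-q)*q^n + y*((y-q)*S y q n)" by (simp add: S_Suc2 algebra_simps)
  also have "\<dots> = (y-q)*q^n + y*(y^n - q^n)" using Suc by simp
  finally show ?case by (simp add: algebra_simps)
qed simp

lemma S_split: "S y q (a+b) = y^a * S y q b + q^b * S y q a"
proof (induction a)
  case (Suc a)
  have "S y q (Suc a + b) = q^(a+b) + y * S y q (a+b)" by (simp add: S_Suc2)
  also have "\<dots> = q^(a+b) + y * (y^a * S y q b + q^b * S y q a)" using Suc by simp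
  also have "\<dots> = y^(Suc a) * S y q b + q^b * (q^a + y * S y q a)" by (simp add: algebra_simps power_add)
  finally show ?case by (simp add: S_Suc2)
qed simp

lemma S_same: "c * S c c n = real n * c^n"
proof (induction n)
  case (Suc n)
  have "c * S c c (Suc n) = c * c^n + c * (c * S c c n)" by (simp add: S_Suc2 algebra_simps)
  also have "\<dots> = c * c^n + c * (real n * c^n)" using Suc by simp
  finally show ?case by (simp add: algebra_simps)
qed simp

lemma S_pos:
  assumes "k \<ge> 1" "0 \<le> y" "0 \<le> q" "0 < y \<or> 0 < q"
  shows "0 < S y q k"
proof -
  obtain m where m: "k = Suc m" using assms(1) by (cases k) auto
  have "y^m \<le> S y q k" using S_Suc1[of y q m] S_nonneg[OF assms(2,3), of m] assms m by simp
  moreover have "q^m \<le> S y q k" using S_Suc2[of y q m] S_nonneg[OF assms(2,3), of m] assms m by simp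
  ultimately show ?thesis using assms by (meson less_le_trans zero_less_power)
qed

lemma fk_props:
  assumes k: "k \<ge> 1" and q: "0 \<le> q" "q \<le> 1"
  shows "0 \<le> fk k q" "fk k q \<le> 1" "fk k q ^ k = (1 - q) * S (fk k q) q k"
    "0 < fk k q \<or> 0 < q"
proof -
  define y where "y = fk k q"
  define c where "c = real k / (k+1)"
  have c0: "0 < c" "c < 1" unfolding c_def using k by auto
  note sp = fspec_side[OF k fk_spec[OF k] q, folded y_def c_def]
  show "0 \<le> fk k q" "fk k q \<le> 1" using sp y_def by auto
  show "0 < fk k q \<or> 0 < q" using sp c0 unfolding y_def[symmetric] by (cases "q \<le> c") auto
  have g: "y^k - y^(k+1) = q^k - q^(k+1)" using sp(3) unfolding gk_def .
  have "y^k = (1 - q) * S y q k"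
  proof (cases "y = q")
    case False
    have "(y - q) * (y^k - (1 - q) * S y q k) = (y-q)*y^k - (1-q) * ((y - q) * S y q k)"
      by (simp add: algebra_simps)
    also have "\<dots> = (y-q)*y^k - (1-q) * (y^k - q^k)" unfolding S_diff ..
    also have "\<dots> = 0" using g by (simp add: algebra_simps)
    finally show ?thesis using False by simp
  next
    case True
    have qc: "q = c" using sp True c0 by (cases "q \<le> c") auto
    have "c * ((1 - c) * S c c k) = (1 - c) * (real k * c^k)" using S_same[of c k] by (simp add: algebra_simps)
    also have "(1 - c) * real k = c" unfolding c_def by (simp add: field_simps)
    then have "(1 - c) * (real k * c^k) = c * c^k" by (simp add: mult.assoc[symmetric])
    finally have "c^k = (1 - c) * S c c k" using c0 by simp
    then show ?thesis using True qc by simp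
  qed
  then show "fk k q ^ k = (1 - q) * S (fk k q) q k" unfolding y_def .
qed

lemma fk_anti:
  assumes k: "k \<ge> 1" and "0 \<le> q1" "q1 \<le> q2" "q2 \<le> 1"
  shows "fk k q2 \<le> fk k q1"
  using fk_spec[OF k] assms unfolding fspec_def monotone_on_def by auto

definition W :: "nat \<Rightarrow> real \<Rightarrow> nat \<Rightarrow> real" where
  "W k q s = fk k q ^ s * S (fk k q) q (k - s) / S (fk k q) q k"

lemma Sk_pos: "k \<ge> 1 \<Longrightarrow> 0 \<le> q \<Longrightarrow> q \<le> 1 \<Longrightarrow> 0 < S (fk k q) q k"
  using S_pos fk_props by auto

lemma W_0: "k \<ge> 1 \<Longrightarrow> 0 \<le> q \<Longrightarrow> q \<le> 1 \<Longrightarrow> W k q 0 = 1"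
  unfolding W_def using Sk_pos[of k q] by simp

lemma W_ge: "k \<ge> 1 \<Longrightarrow> k \<le> s \<Longrightarrow> W k q s = 0"
  unfolding W_def by simp

lemma W_bounds:
  assumes "k \<ge> 1" "0 \<le> q" "q \<le> 1"
  shows "0 \<le> W k q s" "W k q s \<le> 1"
proof -
  define y where "y = fk k q"
  have y: "0 \<le> y" using fk_props[OF assms] y_def by auto
  have D: "0 < S y q k" using Sk_pos[OF assms] y_def by simp
  show "0 \<le> W k q s" unfolding W_def y_def[symmetric]
    using D y S_nonneg[OF y assms(2)] by simp
  show "W k q s \<le> 1"
  proof (cases "s \<le> k")
    case True
    have "S y q k = y^s * S y q (k-s) + q^(k-s) * S y q s"
      using S_split[of y q s "k-s"] True by simp
    moreover have "0 \<le> q^(k-s) * S y q s" using S_nonneg[OF y assms(2)] assms by simp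
    ultimately have "y^s * S y q (k-s) \<le> S y q k" by simp
    then show ?thesis unfolding W_def y_def[symmetric] using D by simp
  next
    case False then show ?thesis using W_ge[OF assms(1), of s] by simp
  qed
qed

lemma W_rec:
  assumes "k \<ge> 1" "0 \<le> q" "q \<le> 1" "s < k"
  shows "fk k q * W k q s = (1 - q) + q * W k q (Suc s)"
proof -
  define y where "y = fk k q"
  define D where "D = S y q k"
  define m where "m = k - Suc s"
  have D: "0 < D" using Sk_pos[OF assms(1-3)] y_def D_def by simp
  have rel: "y^k = (1 - q) * D" using fk_props(3)[OF assms(1-3)] y_def D_def by simp
  have km: "k - s = Suc m" "k - Suc s = m" using assms(4) m_def by auto
  have ks: "Suc s + m = k" using assms(4) m_def by auto
  have "y * (y^s * S y q (k - s)) = y^(Suc s + m) + q * (y^(Suc s) * S y q m)"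
    unfolding km S_Suc1 by (simp add: algebra_simps power_add)
  also have "\<dots> = (1 - q) * D + q * (y^(Suc s) * S y q m)" using rel ks by simp
  finally have eq: "y * (y^s * S y q (k - s)) = (1 - q) * D + q * (y^(Suc s) * S y q m)" .
  have "fk k q * W k q s = y * (y^s * S y q (k - s)) / D"
    unfolding W_def y_def[symmetric] D_def[symmetric] by simp
  also have "\<dots> = (1 - q) + q * (y^(Suc s) * S y q m / D)" unfolding eq using D by (simp add: field_simps)
  also have "y^(Suc s) * S y q m / D = W k q (Suc s)" unfolding W_def y_def[symmetric] D_def[symmetric] km ..
  finally show ?thesis .
qed

lemma cross_term:
  fixes y1 y2 q1 q2 :: real
  assumes nn: "0 \<le> y1" "0 \<le> y2" "0 \<le> q1" "0 \<le> q2" and yq: "y2 * q1 \<le> y1 * q2"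
    and ij: "i < a" "j < s"
  shows "(y2^s * (y2^i * q2^(a-1-i))) * (q1^a * (y1^j * q1^(s-1-j)))
       \<le> (y1^s * (y1^i * q1^(a-1-i))) * (q2^a * (y2^j * q2^(s-1-j)))"
proof -
  define d where "d = s + i - j"
  define e where "e = a - 1 - i"
  define X where "X = y1^j * y2^j * q1^e * q2^e"
  have h1: "s + i = j + d" and h2: "a + (s-1-j) = e + d" using ij unfolding d_def e_def by auto
  have "(y2^s * (y2^i * q2^(a-1-i))) * (q1^a * (y1^j * q1^(s-1-j)))
      = y2^(s+i) * q1^(a + (s-1-j)) * q2^e * y1^j" unfolding e_def by (simp add: power_add mult_ac)
  also have "\<dots> = X * (y2*q1)^d" unfolding h1 h2 X_def by (simp add: power_add power_mult_distrib mult_ac)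
  finally have L: "(y2^s * (y2^i * q2^(a-1-i))) * (q1^a * (y1^j * q1^(s-1-j))) = X * (y2*q1)^d" .
  have "(y1^s * (y1^i * q1^(a-1-i))) * (q2^a * (y2^j * q2^(s-1-j)))
      = y1^(s+i) * q2^(a + (s-1-j)) * q1^e * y2^j" unfolding e_def by (simp add: power_add mult_ac)
  also have "\<dots> = X * (y1*q2)^d" unfolding h1 h2 X_def by (simp add: power_add power_mult_distrib mult_ac)
  finally have R: "(y1^s * (y1^i * q1^(a-1-i))) * (q2^a * (y2^j * q2^(s-1-j))) = X * (y1*q2)^d" .
  have X: "0 \<le> X" unfolding X_def using nn by simp
  have "(y2*q1)^d \<le> (y1*q2)^d" using yq nn by (intro power_mono) auto
  then show ?thesis unfolding L R using X by (rule mult_left_mono)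
qed

lemma cross:
  fixes y1 y2 q1 q2 :: real
  assumes nn: "0 \<le> y1" "0 \<le> y2" "0 \<le> q1" "0 \<le> q2" and yq: "y2 * q1 \<le> y1 * q2"
  shows "(y2^s * S y2 q2 a) * (q1^a * S y1 q1 s) \<le> (y1^s * S y1 q1 a) * (q2^a * S y2 q2 s)"
proof -
  have "(y2^s * S y2 q2 a) * (q1^a * S y1 q1 s)
     = (\<Sum>i<a. \<Sum>j<s. (y2^s * (y2^i * q2^(a-1-i))) * (q1^a * (y1^j * q1^(s-1-j))))"
    unfolding S_def sum_distrib_left[of "y2^s"] sum_distrib_left[of "q1^a"] sum_product ..
  also have "\<dots> \<le> (\<Sum>i<a. \<Sum>j<s. (y1^s * (y1^i * q1^(a-1-i))) * (q2^a * (y2^j * q2^(s-1-j))))"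
    by (intro sum_mono cross_term[OF nn yq]) auto
  also have "\<dots> = (y1^s * S y1 q1 a) * (q2^a * S y2 q2 s)"
    unfolding S_def sum_distrib_left[of "y1^s"] sum_distrib_left[of "q2^a"] sum_product ..
  finally show ?thesis .
qed

lemma W_mono:
  assumes k: "k \<ge> 1" and q: "0 \<le> q1" "q1 \<le> q2" "q2 \<le> 1"
  shows "W k q2 s \<le> W k q1 s"
proof (cases "s \<le> k")
  case False then show ?thesis using W_ge[OF k, of s] by simp
next
  case True
  define y1 where "y1 = fk k q1"
  define y2 where "y2 = fk k q2"
  define a where "a = k - s"
  have p1: "0 \<le> y1" "y1 \<le> 1" using fk_props[OF k, of q1] q y1_def by auto
  have p2: "0 \<le> y2" "y2 \<le> 1" using fk_props[OF k, of q2] q y2_def by auto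
  have y21: "y2 \<le> y1" using fk_anti[OF k q] y1_def y2_def by simp
  have yq: "y2 * q1 \<le> y1 * q2" using y21 q p1 p2 by (meson mult_mono)
  define N1 where "N1 = y1^s * S y1 q1 a"
  define N2 where "N2 = y2^s * S y2 q2 a"
  define B1 where "B1 = q1^a * S y1 q1 s"
  define B2 where "B2 = q2^a * S y2 q2 s"
  have D1: "S y1 q1 k = N1 + B1" unfolding N1_def B1_def a_def using S_split[of y1 q1 s "k-s"] True by simp
  have D2: "S y2 q2 k = N2 + B2" unfolding N2_def B2_def a_def using S_split[of y2 q2 s "k-s"] True by simp
  have P1: "0 < N1 + B1" using Sk_pos[OF k, of q1] q D1 y1_def by simp
  have P2: "0 < N2 + B2" using Sk_pos[OF k, of q2] q D2 y2_def by simp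
  have cr: "N2 * B1 \<le> N1 * B2" unfolding N1_def N2_def B1_def B2_def
    using cross[OF p1(1) p2(1) _ _ yq, of s a] q by simp
  have "N2 / (N2 + B2) \<le> N1 / (N1 + B1)"
    using P1 P2 cr by (simp add: divide_simps algebra_simps)
  then show ?thesis unfolding W_def y1_def[symmetric] y2_def[symmetric] a_def[symmetric] D1 D2
    N1_def[symmetric] N2_def[symmetric] .
qed




fun runb :: "(nat \<Rightarrow> bool) \<Rightarrow> nat \<Rightarrow> nat" where
  "runb b 0 = 0"
| "runb b (Suc m) = (if b (Suc m) then 0 else Suc (runb b m))"

fun ngb :: "nat \<Rightarrow> (nat \<Rightarrow> bool) \<Rightarrow> nat \<Rightarrow> bool" where
  "ngb k b 0 = True"
| "ngb k b (Suc m) = (ngb k b m \<and> runb b (Suc m) < k)"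

lemma runb_local: "(\<forall>j\<in>{1..m}. b j = b' j) \<Longrightarrow> runb b m = runb b' m"
  by (induction m) auto

lemma ngb_local: "(\<forall>j\<in>{1..m}. b j = b' j) \<Longrightarrow> ngb k b m = ngb k b' m"
proof (induction m)
  case (Suc m)
  then have "runb b (Suc m) = runb b' (Suc m)" by (intro runb_local) auto
  with Suc show ?case by auto
qed simp

lemma ngb_run: "k \<ge> 1 \<Longrightarrow> ngb k b m \<Longrightarrow> runb b m < k"
  by (cases m) auto

lemma runb_ge: "r \<le> runb b m \<longleftrightarrow> (r \<le> m \<and> (\<forall>j. m - r < j \<and> j \<le> m \<longrightarrow> \<not> b j))"
proof (induction m arbitrary: r)
  case 0 then show ?case by auto
next
  case (Suc m)
  show ?case
  proof (cases "b (Suc m)")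
    case True
    have "(r \<le> Suc m \<and> (\<forall>j. Suc m - r < j \<and> j \<le> Suc m \<longrightarrow> \<not> b j)) \<Longrightarrow> r = 0"
      using True by (cases r) force+
    then show ?thesis using True by auto
  next
    case False
    show ?thesis
    proof (cases r)
      case 0 then show ?thesis by auto
    next
      case (Suc r')
      have "r \<le> runb b (Suc m) \<longleftrightarrow> r' \<le> runb b m" using False Suc by simp
      also have "\<dots> \<longleftrightarrow> (r' \<le> m \<and> (\<forall>j. m - r' < j \<and> j \<le> m \<longrightarrow> \<not> b j))" by (rule Suc.IH)
      also have "\<dots> \<longleftrightarrow> (r \<le> Suc m \<and> (\<forall>j. Suc m - r < j \<and> j \<le> Suc m \<longrightarrow> \<not> b j))"
        using False Suc by (auto simp: le_Suc_eq)
      finally show ?thesis .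
    qed
  qed
qed

lemma ngb_iff: "ngb k b m \<longleftrightarrow> (\<forall>m'. 1 \<le> m' \<and> m' \<le> m \<longrightarrow> runb b m' < k)"
  by (induction m) (auto simp: le_Suc_eq)

lemma gap_iff:
  assumes "k \<ge> 1"
  shows "has_k_gap k n A w \<longleftrightarrow> \<not> ngb k (\<lambda>i. w \<in> A i) n"
proof -
  have "has_k_gap k n A w \<longleftrightarrow> (\<exists>m. 1 \<le> m \<and> m \<le> n \<and> k \<le> runb (\<lambda>i. w \<in> A i) m)"
    unfolding has_k_gap_def runb_ge
  proof
    assume "\<exists>i\<ge>1. i + k - 1 \<le> n \<and> (\<forall>j\<in>{i..i + k - 1}. w \<notin> A j)"
    then obtain i where i: "i \<ge> 1" "i + k - 1 \<le> n" "\<forall>j\<in>{i..i + k - 1}. w \<notin> A j" by auto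
    show "\<exists>m\<ge>1. m \<le> n \<and> k \<le> m \<and> (\<forall>j. m - k < j \<and> j \<le> m \<longrightarrow> w \<notin> A j)"
      using i assms by (intro exI[of _ "i + k - 1"]) auto
  next
    assume "\<exists>m\<ge>1. m \<le> n \<and> k \<le> m \<and> (\<forall>j. m - k < j \<and> j \<le> m \<longrightarrow> w \<notin> A j)"
    then obtain m where m: "m \<ge> 1" "m \<le> n" "k \<le> m" "\<forall>j. m - k < j \<and> j \<le> m \<longrightarrow> w \<notin> A j" by auto
    show "\<exists>i\<ge>1. i + k - 1 \<le> n \<and> (\<forall>j\<in>{i..i + k - 1}. w \<notin> A j)"
      using m assms by (intro exI[of _ "m - k + 1"]) auto
  qed
  then show ?thesis unfolding ngb_iff by (auto simp: not_less)
qed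




context prob_space
begin

lemma pred_sigma:
  assumes fin: "finite J" and ev: "A ` J \<subseteq> events"
    and loc: "\<And>b b'. (\<forall>i\<in>J. b i = b' i) \<Longrightarrow> F b = F b'"
  shows "{w\<in>space M. F (\<lambda>i. w \<in> A i)} \<in> sigma_sets (space M) (A ` J)"
proof -
  let ?S = "sigma_sets (space M) (A ` J)"
  interpret S: sigma_algebra "space M" ?S
    using ev sets.sets_into_space by (intro sigma_algebra_sigma_sets) auto
  define atom where "atom T = space M \<inter> (\<Inter>i\<in>J. if i \<in> T then A i else space M - A i)" for T
  have atomS: "atom T \<in> ?S" for T
  proof (cases "J = {}")
    case True then show ?thesis unfolding atom_def using S.top by simp
  next
    case False
    have "(\<Inter>i\<in>J. if i \<in> T then A i else space M - A i) \<in> ?S"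
    proof (rule S.finite_INT[OF fin False])
      fix i assume "i \<in> J"
      then have "A i \<in> ?S" by (intro sigma_sets.Basic) auto
      then show "(if i \<in> T then A i else space M - A i) \<in> ?S" using S.compl_sets by auto
    qed
    then show ?thesis unfolding atom_def using S.top S.Int by blast
  qed
  have eq: "{w\<in>space M. F (\<lambda>i. w \<in> A i)} = (\<Union>T\<in>{T. T \<subseteq> J \<and> F (\<lambda>i. i \<in> T)}. atom T)"
  proof (rule set_eqI, rule iffI)
    fix w assume w: "w \<in> {w\<in>space M. F (\<lambda>i. w \<in> A i)}"
    let ?T = "{i\<in>J. w \<in> A i}"
    have "F (\<lambda>i. i \<in> ?T) = F (\<lambda>i. w \<in> A i)" by (rule loc) auto
    then have FT: "F (\<lambda>i. i \<in> ?T)" using w by simp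
    have aT: "w \<in> atom ?T" using w unfolding atom_def by auto
    show "w \<in> (\<Union>T\<in>{T. T \<subseteq> J \<and> F (\<lambda>i. i \<in> T)}. atom T)"
      by (rule UN_I[of ?T]) (use FT aT in auto)
  next
    fix w assume "w \<in> (\<Union>T\<in>{T. T \<subseteq> J \<and> F (\<lambda>i. i \<in> T)}. atom T)"
    then obtain T where T: "T \<subseteq> J" "F (\<lambda>i. i \<in> T)" "w \<in> atom T" by auto
    have w1: "w \<in> space M" using T(3) unfolding atom_def by blast
    have w2: "\<forall>i\<in>J. (w \<in> A i) = (i \<in> T)"
    proof
      fix i assume "i \<in> J"
      then have "w \<in> (if i \<in> T then A i else space M - A i)" using T(3) unfolding atom_def by blast
      then show "(w \<in> A i) = (i \<in> T)" by (cases "i \<in> T") auto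
    qed
    note w = w1 w2
    have "F (\<lambda>i. w \<in> A i) = F (\<lambda>i. i \<in> T)" by (rule loc) (use w in auto)
    then show "w \<in> {w\<in>space M. F (\<lambda>i. w \<in> A i)}" using T w by auto
  qed
  have "finite {T. T \<subseteq> J \<and> F (\<lambda>i. i \<in> T)}"
    by (rule finite_subset[of _ "Pow J"]) (use fin in auto)
  then have "(\<Union>T\<in>{T. T \<subseteq> J \<and> F (\<lambda>i. i \<in> T)}. atom T) \<in> ?S"
    using atomS by (intro S.finite_UN) auto
  then show ?thesis unfolding eq .
qed

lemma indep_one:
  assumes ind: "indep_events A I" and J: "J \<subseteq> I" "j \<in> I" "j \<notin> J"
    and B: "B \<in> sigma_sets (space M) (A ` J)"
  shows "prob (B \<inter> A j) = prob B * prob (A j)"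
proof -
  define Ix where "Ix b = (if b then J else {j})" for b :: bool
  have "indep_sets (\<lambda>i. {A i}) (\<Union>b\<in>UNIV. Ix b)"
    using ind unfolding indep_events_def_alt by (rule indep_sets_mono_index[rotated]) (auto simp: Ix_def J)
  then have "indep_sets (\<lambda>b. sigma_sets (space M) (\<Union>i\<in>Ix b. {A i})) UNIV"
    by (rule indep_sets_collect_sigma) (auto simp: Int_stable_def disjoint_family_on_def Ix_def J)
  then have "prob (\<Inter>b\<in>UNIV. (if b then B else A j)) = (\<Prod>b\<in>UNIV. prob (if b then B else A j))"
    by (rule indep_setsD) (auto simp: Ix_def B UNION_singleton_eq_range intro: sigma_sets.Basic)
  then show ?thesis by (simp add: UNIV_bool Int_commute)
qed

end




context prob_space
begin

lemma core:
  assumes k: "k \<ge> 1" and n: "n \<ge> 1" and ind: "indep_events A {1..n}"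
    and mono: "mono_on {1..n} (\<lambda>i. prob (A i))"
  shows "(\<Prod>i=1..n. fk k (1 - prob (A i))) \<le> prob {w\<in>space M. ngb k (\<lambda>i. w \<in> A i) n}"
proof -
  have ev: "A i \<in> events" if "i \<in> {1..n}" for i using ind that unfolding indep_events_def by auto
  define q where "q i = 1 - prob (A i)" for i
  have q0: "0 \<le> q i" for i unfolding q_def by simp
  have q1: "q i \<le> 1" for i unfolding q_def by simp
  define P where "P m s = prob {w\<in>space M. ngb k (\<lambda>i. w\<in>A i) m \<and> runb (\<lambda>i. w\<in>A i) m = s}" for m s
  define N where "N m = prob {w\<in>space M. ngb k (\<lambda>i. w\<in>A i) m}" for m
  define Wt where "Wt m = W k (q (min (Suc m) n))" for m
  define V where "V m = (\<Sum>s<k. P m s * Wt m s)" for m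
  obtain k1 where k1: "k = Suc k1" using k by (cases k) auto
  have predS: "{w\<in>space M. F (\<lambda>i. w\<in>A i)} \<in> sigma_sets (space M) (A ` {1..m})"
    if "m \<le> n" "\<And>b b'. (\<forall>i\<in>{1..m}. b i = b' i) \<Longrightarrow> F b = F b'" for m F
  proof -
    have "A ` {1..m} \<subseteq> events" using that(1) ev by auto
    from pred_sigma[OF _ this that(2)] show ?thesis by simp
  qed
  have sigev: "sigma_sets (space M) (A ` {1..m}) \<subseteq> events" if "m \<le> n" for m
    using that ev by (intro sets.sigma_sets_subset) auto
  have locP: "(\<forall>i\<in>{1..m}. b i = b' i) \<Longrightarrow> (ngb k b m \<and> runb b m = s) = (ngb k b' m \<and> runb b' m = s)"
    for m s b b' using ngb_local[of m b b' k] runb_local[of m b b'] by simp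
  have locN: "(\<forall>i\<in>{1..m}. b i = b' i) \<Longrightarrow> ngb k b m = ngb k b' m"
    for m b b' using ngb_local[of m b b' k] by simp
  have PS_set: "{w\<in>space M. ngb k (\<lambda>i. w\<in>A i) m \<and> runb (\<lambda>i. w\<in>A i) m = s} \<in> sigma_sets (space M) (A ` {1..m})"
    if "m \<le> n" for m s
    by (rule predS[of m "\<lambda>b. ngb k b m \<and> runb b m = s"]) (use that locP in auto)
  have N_set: "{w\<in>space M. ngb k (\<lambda>i. w\<in>A i) m} \<in> sigma_sets (space M) (A ` {1..m})"
    if "m \<le> n" for m
    by (rule predS[of m "\<lambda>b. ngb k b m"]) (use that locN in auto)
  have Pnn: "0 \<le> P m s" for m s by (simp add: P_def)
  have N_sum: "N m = (\<Sum>s<k. P m s)" if "m \<le> n" for m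
  proof -
    have eq: "{w\<in>space M. ngb k (\<lambda>i. w\<in>A i) m} =
        (\<Union>s\<in>{..<k}. {w\<in>space M. ngb k (\<lambda>i. w\<in>A i) m \<and> runb (\<lambda>i. w\<in>A i) m = s})"
      using ngb_run[OF k] by auto
    have "prob (\<Union>s\<in>{..<k}. {w\<in>space M. ngb k (\<lambda>i. w\<in>A i) m \<and> runb (\<lambda>i. w\<in>A i) m = s})
        = (\<Sum>s<k. P m s)" unfolding P_def
      by (rule finite_measure_finite_Union) (use PS_set[OF that] sigev[OF that] in \<open>auto simp: disjoint_family_on_def\<close>)
    then show ?thesis unfolding N_def eq .
  qed
  have P0: "P (Suc m) 0 = prob (A (Suc m)) * N m" if "Suc m \<le> n" for m
  proof -
    have "{w\<in>space M. ngb k (\<lambda>i. w\<in>A i) (Suc m) \<and> runb (\<lambda>i. w\<in>A i) (Suc m) = 0}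
        = {w\<in>space M. ngb k (\<lambda>i. w\<in>A i) m} \<inter> A (Suc m)"
      using k by auto
    moreover have "prob ({w\<in>space M. ngb k (\<lambda>i. w\<in>A i) m} \<inter> A (Suc m)) = N m * prob (A (Suc m))"
      unfolding N_def by (rule indep_one[OF ind _ _ _ N_set]) (use that in auto)
    ultimately show ?thesis unfolding P_def by simp
  qed
  have PS: "P (Suc m) (Suc s) = q (Suc m) * P m s" if "Suc m \<le> n" "Suc s < k" for m s
  proof -
    let ?B = "{w\<in>space M. ngb k (\<lambda>i. w\<in>A i) m \<and> runb (\<lambda>i. w\<in>A i) m = s}"
    have eq: "{w\<in>space M. ngb k (\<lambda>i. w\<in>A i) (Suc m) \<and> runb (\<lambda>i. w\<in>A i) (Suc m) = Suc s}
        = ?B - (?B \<inter> A (Suc m))"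
      using that by auto
    have Bs: "?B \<in> sigma_sets (space M) (A ` {1..m})" using PS_set that by simp
    have "prob (?B \<inter> A (Suc m)) = prob ?B * prob (A (Suc m))"
      by (rule indep_one[OF ind _ _ _ Bs]) (use that in auto)
    moreover have "prob (?B - (?B \<inter> A (Suc m))) = prob ?B - prob (?B \<inter> A (Suc m))"
      by (rule finite_measure_Diff) (use Bs sigev[of m] that ev in auto)
    ultimately show ?thesis unfolding P_def q_def eq by (simp add: algebra_simps)
  qed
  have step: "fk k (q (Suc m)) * V m \<le> V (Suc m)" if "Suc m \<le> n" for m
  proof -
    define u where "u = prob (A (Suc m))"
    define W' where "W' = Wt (Suc m)"
    define Wm where "Wm = W k (q (Suc m))"
    have qu: "q (Suc m) = 1 - u" unfolding q_def u_def ..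
    have u1: "0 \<le> 1 - u" using q0[of "Suc m"] qu by simp
    have Wtm: "Wt m = Wm" unfolding Wt_def Wm_def using that by (simp add: min_def)
    have W'0: "W' 0 = 1" unfolding W'_def Wt_def using W_0[OF k q0 q1] .
    have W'k: "W' k = 0" unfolding W'_def Wt_def by (rule W_ge[OF k]) simp
    have Wle: "Wm s \<le> W' s" for s
    proof -
      have "q (min (Suc (Suc m)) n) \<le> q (Suc m)"
      proof (cases "Suc (Suc m) \<le> n")
        case True
        then have "prob (A (Suc m)) \<le> prob (A (Suc (Suc m)))" using mono unfolding monotone_on_def by auto
        then show ?thesis using True unfolding q_def by (simp add: min_def)
      next
        case False then have "min (Suc (Suc m)) n = Suc m" using that by simp
        then show ?thesis by simp
      qed
      then show ?thesis unfolding Wm_def W'_def Wt_def using W_mono[OF k q0 _ q1] by blast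
    qed
    have "fk k (q (Suc m)) * V m = (\<Sum>s<k. P m s * (fk k (q (Suc m)) * Wm s))"
      unfolding V_def Wtm sum_distrib_left by (simp add: mult_ac)
    also have "\<dots> = (\<Sum>s<k. P m s * (u + (1-u) * Wm (Suc s)))"
    proof (rule sum.cong)
      fix s assume "s \<in> {..<k}"
      then have "fk k (q (Suc m)) * Wm s = 1 - q (Suc m) + q (Suc m) * Wm (Suc s)"
        unfolding Wm_def by (intro W_rec[OF k q0 q1]) auto
      then show "P m s * (fk k (q (Suc m)) * Wm s) = P m s * (u + (1-u) * Wm (Suc s))"
        using qu by simp
    qed simp
    also have "\<dots> \<le> (\<Sum>s<k. P m s * (u + (1-u) * W' (Suc s)))"
      by (intro sum_mono mult_left_mono add_left_mono Pnn u1 Wle)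
    also have "\<dots> = u * (\<Sum>s<k. P m s) + (\<Sum>s<k1. (1-u) * P m s * W' (Suc s))"
    proof -
      have "(\<Sum>s<k. P m s * (u + (1-u) * W' (Suc s))) = (\<Sum>s<k. u * P m s) + (\<Sum>s<k. (1-u) * P m s * W' (Suc s))"
        by (simp add: sum.distrib[symmetric] distrib_left mult_ac)
      also have "(\<Sum>s<k. u * P m s) = u * (\<Sum>s<k. P m s)" by (simp add: sum_distrib_left)
      also have "(\<Sum>s<k. (1-u) * P m s * W' (Suc s)) = (\<Sum>s<k1. (1-u) * P m s * W' (Suc s))"
        unfolding k1 sum.lessThan_Suc using W'k k1 by simp
      finally show ?thesis .
    qed
    also have "\<dots> = P (Suc m) 0 * W' 0 + (\<Sum>s<k1. P (Suc m) (Suc s) * W' (Suc s))"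
      using P0[OF that] PS[OF that] W'0 N_sum[of m] that k1 qu unfolding u_def
      by (auto intro!: sum.cong)
    also have "\<dots> = V (Suc m)"
      unfolding V_def W'_def k1 sum.lessThan_Suc_shift ..
    finally show ?thesis .
  qed
  have V0: "V 0 = 1"
  proof -
    have "P 0 0 = 1" unfolding P_def by (simp add: prob_space)
    moreover have "P 0 (Suc s) = 0" for s unfolding P_def by simp
    moreover have "Wt 0 0 = 1" unfolding Wt_def using W_0[OF k q0 q1] .
    ultimately show ?thesis unfolding V_def k1 sum.lessThan_Suc_shift by simp
  qed
  have main: "(\<Prod>i=1..m. fk k (q i)) \<le> V m" if "m \<le> n" for m
    using that
  proof (induction m)
    case 0 then show ?case using V0 by simp
  next
    case (Suc m)
    have y0: "0 \<le> fk k (q (Suc m))" using fk_props[OF k q0 q1] by simp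
    have "(\<Prod>i=1..Suc m. fk k (q i)) = (\<Prod>i=1..m. fk k (q i)) * fk k (q (Suc m))"
      by (simp add: prod.cl_ivl_Suc)
    also have "\<dots> \<le> V m * fk k (q (Suc m))"
      using Suc y0 by (intro mult_right_mono) auto
    also have "\<dots> \<le> V (Suc m)" using step[OF Suc.prems] by (simp add: mult.commute)
    finally show ?case .
  qed
  have "V n \<le> N n"
  proof -
    have "V n \<le> (\<Sum>s<k. P n s)" unfolding V_def
      by (intro sum_mono) (use Pnn W_bounds[OF k q0 q1] in \<open>auto simp: Wt_def intro: mult_left_le\<close>)
    then show ?thesis using N_sum[of n] by simp
  qed
  then show ?thesis using main[of n] unfolding N_def q_def by simp
qed

end




lemma gap_rev:
  assumes k: "k \<ge> 1"
  shows "has_k_gap k n (\<lambda>i. A (n+1-i)) w \<longleftrightarrow> has_k_gap k n A w"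
  unfolding has_k_gap_def
proof
  assume "\<exists>i\<ge>1. i + k - 1 \<le> n \<and> (\<forall>j\<in>{i..i + k - 1}. w \<notin> A (n + 1 - j))"
  then obtain i where i: "i \<ge> 1" "i + k - 1 \<le> n" "\<forall>j\<in>{i..i + k - 1}. w \<notin> A (n + 1 - j)" by auto
  show "\<exists>i\<ge>1. i + k - 1 \<le> n \<and> (\<forall>j\<in>{i..i + k - 1}. w \<notin> A j)"
  proof (intro exI[of _ "n + 1 - (i + k - 1)"] conjI ballI)
    fix j assume j: "j \<in> {n + 1 - (i + k - 1)..n + 1 - (i + k - 1) + k - 1}"
    have "n + 1 - j \<in> {i..i + k - 1}" using j i k by auto
    then have "w \<notin> A (n + 1 - (n + 1 - j))" using i by blast
    moreover have "n + 1 - (n + 1 - j) = j" using j i k by auto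
    ultimately show "w \<notin> A j" by simp
  qed (use i k in auto)
next
  assume "\<exists>i\<ge>1. i + k - 1 \<le> n \<and> (\<forall>j\<in>{i..i + k - 1}. w \<notin> A j)"
  then obtain i where i: "i \<ge> 1" "i + k - 1 \<le> n" "\<forall>j\<in>{i..i + k - 1}. w \<notin> A j" by auto
  show "\<exists>i\<ge>1. i + k - 1 \<le> n \<and> (\<forall>j\<in>{i..i + k - 1}. w \<notin> A (n + 1 - j))"
  proof (intro exI[of _ "n + 1 - (i + k - 1)"] conjI ballI)
    fix j assume j: "j \<in> {n + 1 - (i + k - 1)..n + 1 - (i + k - 1) + k - 1}"
    have "n + 1 - j \<in> {i..i + k - 1}" using j i k by auto
    then show "w \<notin> A (n + 1 - j)" using i by blast
  qed (use i k in auto)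
qed

theorem mainTheorem3:
  fixes M :: "'a measure" and A :: "nat \<Rightarrow> 'a set" and k n :: nat
  assumes "prob_space M"
    and "k \<ge> 1"
    and "\<forall>i\<in>{1..n}. A i \<in> sets M"
    and "prob_space.indep_events M A {1..n}"
    and "mono_on {1..n} (\<lambda>i. measure M (A i)) \<or> antimono_on {1..n} (\<lambda>i. measure M (A i))"
  shows "measure M {w \<in> space M. \<not> has_k_gap k n A w} \<ge> (\<Prod>i=1..n. fk k (1 - measure M (A i)))"
proof -
  interpret prob_space M by fact
  have k: "k \<ge> 1" by fact
  have ev: "A i \<in> events" if "i \<in> {1..n}" for i using assms(3) that by auto
  have gap: "{w \<in> space M. \<not> has_k_gap k n B w} = {w\<in>space M. ngb k (\<lambda>i. w\<in>B i) n}" for B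
    by (simp add: gap_iff[OF k])
  show ?thesis
  proof (cases "n = 0")
    case True
    then show ?thesis unfolding gap by (simp add: prob_space)
  next
    case False
    then have n: "n \<ge> 1" by simp
    from assms(5) show ?thesis
    proof
      assume mono: "mono_on {1..n} (\<lambda>i. measure M (A i))"
      show ?thesis unfolding gap using core[OF k n assms(4) mono] .
    next
      assume anti: "antimono_on {1..n} (\<lambda>i. measure M (A i))"
      define A' where "A' i = A (n + 1 - i)" for i
      have ind': "indep_events A' {1..n}"
        unfolding indep_events_def
      proof (intro conjI allI impI)
        show "A' ` {1..n} \<subseteq> events"
        proof
          fix x assume "x \<in> A' ` {1..n}"
          then obtain i where "i \<in> {1..n}" "x = A (n + 1 - i)" unfolding A'_def by auto
          moreover have "n + 1 - i \<in> {1..n}" using calculation(1) by auto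
          ultimately show "x \<in> events" using ev by blast
        qed
        fix J assume J: "J \<subseteq> {1..n}" "J \<noteq> {}" "finite J"
        let ?f = "\<lambda>j. n + 1 - j"
        have inj: "inj_on ?f J"
        proof (rule inj_onI)
          fix x y assume "x \<in> J" "y \<in> J" "n + 1 - x = n + 1 - y"
          moreover have "x \<le> n" "y \<le> n" using J(1) calculation(1,2) by auto
          ultimately show "x = y" by linarith
        qed
        have fJ1: "?f ` J \<subseteq> {1..n}"
        proof
          fix x assume "x \<in> ?f ` J"
          then obtain j where "j \<in> J" "x = n + 1 - j" by auto
          moreover have "j \<in> {1..n}" using J(1) calculation(1) by auto
          ultimately show "x \<in> {1..n}" by auto
        qed
        have fJ: "?f ` J \<subseteq> {1..n}" "?f ` J \<noteq> {}" "finite (?f ` J)" using J fJ1 by auto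
        have "prob (\<Inter>j\<in>?f ` J. A j) = (\<Prod>j\<in>?f ` J. prob (A j))"
          using assms(4) fJ unfolding indep_events_def by blast
        then show "prob (\<Inter>j\<in>J. A' j) = (\<Prod>j\<in>J. prob (A' j))"
          using prod.reindex[OF inj, of "\<lambda>j. prob (A j)"] unfolding A'_def by (simp add: image_image)
      qed
      have mono': "mono_on {1..n} (\<lambda>i. prob (A' i))"
        unfolding monotone_on_def A'_def
      proof (intro ballI impI)
        fix x y assume xy: "x \<in> {1..n}" "y \<in> {1..n}" "x \<le> y"
        have "n + 1 - y \<in> {1..n}" "n + 1 - x \<in> {1..n}" "n + 1 - y \<le> n + 1 - x" using xy by auto
        then show "prob (A (n + 1 - x)) \<le> prob (A (n + 1 - y))"
          using anti unfolding monotone_on_def by blast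
      qed
      have "(\<Prod>i=1..n. fk k (1 - prob (A' i))) \<le> prob {w\<in>space M. ngb k (\<lambda>i. w \<in> A' i) n}"
        by (rule core[OF k n ind' mono'])
      also have "{w\<in>space M. ngb k (\<lambda>i. w \<in> A' i) n} = {w\<in>space M. ngb k (\<lambda>i. w \<in> A i) n}"
        unfolding gap[symmetric] A'_def using gap_rev[OF k, of n A] by auto
      also have "(\<Prod>i=1..n. fk k (1 - prob (A' i))) = (\<Prod>i=1..n. fk k (1 - prob (A i)))"
        unfolding A'_def
        by (rule prod.reindex_bij_witness[of _ "\<lambda>i. n + 1 - i" "\<lambda>i. n + 1 - i"]) auto
      finally show ?thesis unfolding gap .
    qed
  qed
qed


end
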